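(* Let $S$ be an orthodox semigroup with an adequate (and hence inverse) transversal $S^0$. Then for all $x,y\in S$, $\overline{xy}=\overline{x}\,\overline{y}$.
   Context: An orthodox semigroup is a regular semigroup whose idempotents form a subsemigroup. For a semigroup $S$, $S^1$ is $S$ with an identity adjoined, $\mathcal{L},\mathcal{R}$ Green's relations. $\mathcal{R}^\ast=\{(a,b):\forall x,y\in S^1,\ xa=ya\iff xb=yb\}$, $\mathcal{L}^\ast=\{(a,b):\forall x,y\in S^1,\ ax=ay\iff bx=by\}$. $S$ is abundant if each $\mathcal{R}^\ast$- and $\mathcal{L}^\ast$-class contains an idempotent (regular semigroups are abundant); adequate if also idempotents commute (then $a^+$, $a^\ast$ are the unique idempotents $\mathcal{R}^\ast$-, resp. $\mathcal{L}^\ast$-related to $a$). An abundant subsemigroup $U$ of abundant $S$ is a $\ast$-subsemigroup if $\mathcal{L}^\ast(U)=\mathcal{L}^\ast(S)\cap(U\times U)$, $\mathcal{R}^\ast(U)=\mathcal{R}^\ast(S)\cap(U\times U)$. An adequate $\ast$-subsemigroup $S^0$ of abundant $S$ is an adequate transversal if each $x\in S$ has a unique $\overline{x}\in S^0$ and idempotents $e,f$ of $S$ with $x=e\overline{x}f$, $e\,\mathcal{L}\,\overline{x}^+$, $f\,\mathcal{R}\,\overline{x}^\ast$. *)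

theory Defs
  imports Main
begin

text \<open>The semigroup S is the whole carrier of a type of class semigroup_mult.
  Elements of S^1 (resp. U^1) are encoded as options: None is the adjoined identity.\<close>

definition one_ext :: "'a set \<Rightarrow> 'a option set" where
  "one_ext U = {None} \<union> Some ` U"

fun lmul :: "'a::semigroup_mult option \<Rightarrow> 'a \<Rightarrow> 'a" where
  "lmul None a = a"
| "lmul (Some x) a = x * a"

fun rmul :: "'a::semigroup_mult \<Rightarrow> 'a option \<Rightarrow> 'a" where
  "rmul a None = a"
| "rmul a (Some x) = a * x"

definition idem :: "'a::semigroup_mult \<Rightarrow> bool" where
  "idem e \<longleftrightarrow> e * e = e"

definition subsemigroup :: "'a::semigroup_mult set \<Rightarrow> bool" where
  "subsemigroup U \<longleftrightarrow> (\<forall>a\<in>U. \<forall>b\<in>U. a * b \<in> U)"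

definition regular :: "'a::semigroup_mult itself \<Rightarrow> bool" where
  "regular _ \<longleftrightarrow> (\<forall>a::'a. \<exists>x. a * x * a = a)"

definition orthodox :: "'a::semigroup_mult itself \<Rightarrow> bool" where
  "orthodox T \<longleftrightarrow> regular T \<and> (\<forall>e f::'a. idem e \<longrightarrow> idem f \<longrightarrow> idem (e * f))"

definition greenL :: "'a::semigroup_mult \<Rightarrow> 'a \<Rightarrow> bool" where
  "greenL a b \<longleftrightarrow> (\<exists>x\<in>one_ext UNIV. a = lmul x b) \<and> (\<exists>y\<in>one_ext UNIV. b = lmul y a)"

definition greenR :: "'a::semigroup_mult \<Rightarrow> 'a \<Rightarrow> bool" where
  "greenR a b \<longleftrightarrow> (\<exists>x\<in>one_ext UNIV. a = rmul b x) \<and> (\<exists>y\<in>one_ext UNIV. b = rmul a y)"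

definition Rstar :: "'a::semigroup_mult set \<Rightarrow> 'a \<Rightarrow> 'a \<Rightarrow> bool" where
  "Rstar U a b \<longleftrightarrow> (\<forall>x\<in>one_ext U. \<forall>y\<in>one_ext U. lmul x a = lmul y a \<longleftrightarrow> lmul x b = lmul y b)"

definition Lstar :: "'a::semigroup_mult set \<Rightarrow> 'a \<Rightarrow> 'a \<Rightarrow> bool" where
  "Lstar U a b \<longleftrightarrow> (\<forall>x\<in>one_ext U. \<forall>y\<in>one_ext U. rmul a x = rmul a y \<longleftrightarrow> rmul b x = rmul b y)"

definition abundant :: "'a::semigroup_mult set \<Rightarrow> bool" where
  "abundant U \<longleftrightarrow> subsemigroup U \<and>
     (\<forall>a\<in>U. (\<exists>e\<in>U. idem e \<and> Rstar U a e) \<and> (\<exists>f\<in>U. idem f \<and> Lstar U a f))"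

definition adequate :: "'a::semigroup_mult set \<Rightarrow> bool" where
  "adequate U \<longleftrightarrow> abundant U \<and> (\<forall>e\<in>U. \<forall>f\<in>U. idem e \<longrightarrow> idem f \<longrightarrow> e * f = f * e)"

definition star_subsemigroup :: "'a::semigroup_mult set \<Rightarrow> bool" where
  "star_subsemigroup U \<longleftrightarrow> abundant U \<and>
     (\<forall>a\<in>U. \<forall>b\<in>U. (Lstar U a b \<longleftrightarrow> Lstar UNIV a b) \<and> (Rstar U a b \<longleftrightarrow> Rstar UNIV a b))"

definition plus :: "'a::semigroup_mult set \<Rightarrow> 'a \<Rightarrow> 'a" where
  "plus U a = (THE e. e \<in> U \<and> idem e \<and> Rstar U a e)"

definition star :: "'a::semigroup_mult set \<Rightarrow> 'a \<Rightarrow> 'a" where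
  "star U a = (THE f. f \<in> U \<and> idem f \<and> Lstar U a f)"

definition decomp :: "'a::semigroup_mult set \<Rightarrow> 'a \<Rightarrow> 'a \<Rightarrow> bool" where
  "decomp S0 x xb \<longleftrightarrow> xb \<in> S0 \<and>
     (\<exists>e f. idem e \<and> idem f \<and> x = e * xb * f \<and> greenL e (plus S0 xb) \<and> greenR f (star S0 xb))"

definition adequate_transversal :: "'a::semigroup_mult set \<Rightarrow> bool" where
  "adequate_transversal S0 \<longleftrightarrow> adequate S0 \<and> star_subsemigroup S0 \<and>
     (\<forall>x. \<exists>!xb. decomp S0 x xb)"

definition bar :: "'a::semigroup_mult set \<Rightarrow> 'a \<Rightarrow> 'a" where
  "bar S0 x = (THE xb. decomp S0 x xb)"

end

theory Submission
  imports Defs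
begin

lemma lmul_assoc: "lmul u (s * t) = lmul u s * t"
  by (cases u) (simp_all add: mult.assoc)

lemma rmul_assoc: "rmul (s * t) u = s * rmul t u"
  by (cases u) (simp_all add: mult.assoc)

lemma one_ext_None[simp]: "None \<in> one_ext U"
  by (simp add: one_ext_def)

lemma one_ext_Some[simp]: "Some y \<in> one_ext U \<longleftrightarrow> y \<in> U"
  by (auto simp: one_ext_def)

lemma Rstar_idem_left:
  assumes "Rstar U a e" "idem e" "e \<in> U"
  shows "e * a = a"
proof -
  have "lmul (Some e) e = lmul None e" using assms(2) by (simp add: idem_def)
  then have "lmul (Some e) a = lmul None a"
    using assms(1)[unfolded Rstar_def, rule_format, of "Some e" None] assms(3) by simp
  then show ?thesis by simp
qed

lemma Rstar_inv:
  assumes "Rstar UNIV a e" "a * x * a = a"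
  shows "a * x * e = e"
proof -
  have "lmul (Some (a*x)) a = lmul None a" using assms(2) by simp
  then have "lmul (Some (a*x)) e = lmul None e"
    using assms(1)[unfolded Rstar_def, rule_format, of "Some (a*x)" None] by simp
  then show ?thesis by simp
qed

lemma Lstar_idem_right:
  assumes "Lstar U a f" "idem f" "f \<in> U"
  shows "a * f = a"
proof -
  have "rmul f (Some f) = rmul f None" using assms(2) by (simp add: idem_def)
  then have "rmul a (Some f) = rmul a None"
    using assms(1)[unfolded Lstar_def, rule_format, of "Some f" None] assms(3) by simp
  then show ?thesis by simp
qed

lemma Lstar_inv:
  assumes "Lstar UNIV a f" "a * x * a = a"
  shows "f * x * a = f"
proof -
  have "rmul a (Some (x*a)) = rmul a None" using assms(2) by (simp add: mult.assoc)
  then have "rmul f (Some (x*a)) = rmul f None"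
    using assms(1)[unfolded Lstar_def, rule_format, of "Some (x*a)" None] by simp
  then show ?thesis by (simp add: mult.assoc)
qed

lemma greenL_idem:
  assumes "greenL g p" "idem g" "idem p"
  shows "g * p = g" "p * g = p"
proof -
  obtain u v where u: "g = lmul u p" and v: "p = lmul v g"
    using assms(1) unfolding greenL_def by blast
  have "g * p = lmul u (p * p)" using u lmul_assoc by metis
  then show "g * p = g" using u assms(3) by (simp add: idem_def)
  have "p * g = lmul v (g * g)" using v lmul_assoc by metis
  then show "p * g = p" using v assms(2) by (simp add: idem_def)
qed

lemma greenR_idem:
  assumes "greenR h q" "idem h" "idem q"
  shows "q * h = h" "h * q = q"
proof -
  obtain u v where u: "h = rmul q u" and v: "q = rmul h v"
    using assms(1) unfolding greenR_def by blast
  have "q * h = rmul (q * q) u" using u rmul_assoc by metis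
  then show "q * h = h" using u assms(3) by (simp add: idem_def)
  have "h * q = rmul (h * h) v" using v rmul_assoc by metis
  then show "h * q = q" using v assms(2) by (simp add: idem_def)
qed

lemma plus_unique:
  assumes ad: "adequate S0" and "e \<in> S0" "idem e" "Rstar S0 c e"
    and "e' \<in> S0" "idem e'" "Rstar S0 c e'"
  shows "e = e'"
proof -
  have R: "Rstar S0 e e'" using assms unfolding Rstar_def by blast
  have "e * e' = e'" using R Rstar_idem_left[of S0 e' e] assms by (auto simp: Rstar_def)
  moreover have "e' * e = e" using R Rstar_idem_left[of S0 e e'] assms by (auto simp: Rstar_def)
  moreover have "e * e' = e' * e" using ad assms unfolding adequate_def by blast
  ultimately show ?thesis by simp
qed

lemma star_unique:
  assumes ad: "adequate S0" and "e \<in> S0" "idem e" "Lstar S0 c e"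
    and "e' \<in> S0" "idem e'" "Lstar S0 c e'"
  shows "e = e'"
proof -
  have R: "Lstar S0 e e'" using assms unfolding Lstar_def by blast
  have "e * e' = e" using R Lstar_idem_right[of S0 e e'] assms by (auto simp: Lstar_def)
  moreover have "e' * e = e'" using R Lstar_idem_right[of S0 e' e] assms by (auto simp: Lstar_def)
  moreover have "e * e' = e' * e" using ad assms unfolding adequate_def by blast
  ultimately show ?thesis by simp
qed

lemma plus_prop:
  assumes ad: "adequate S0" and b: "b \<in> S0"
  shows "plus S0 b \<in> S0 \<and> idem (plus S0 b) \<and> Rstar S0 b (plus S0 b)"
proof -
  have "\<exists>e. e \<in> S0 \<and> idem e \<and> Rstar S0 b e"
    using ad b unfolding adequate_def abundant_def by blast
  then have "\<exists>!e. e \<in> S0 \<and> idem e \<and> Rstar S0 b e"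
    using plus_unique[OF ad] by blast
  then show ?thesis unfolding plus_def by (rule theI')
qed

lemma star_prop:
  assumes ad: "adequate S0" and b: "b \<in> S0"
  shows "star S0 b \<in> S0 \<and> idem (star S0 b) \<and> Lstar S0 b (star S0 b)"
proof -
  have "\<exists>e. e \<in> S0 \<and> idem e \<and> Lstar S0 b e"
    using ad b unfolding adequate_def abundant_def by blast
  then have "\<exists>!e. e \<in> S0 \<and> idem e \<and> Lstar S0 b e"
    using star_unique[OF ad] by blast
  then show ?thesis unfolding star_def by (rule theI')
qed

lemma sub_mult:
  assumes "adequate S0" "a \<in> S0" "b \<in> S0"
  shows "a * b \<in> S0"
  using assms unfolding adequate_def abundant_def subsemigroup_def by blast

lemma plus_eq:
  assumes ad: "adequate S0" and c: "c \<in> S0" "w \<in> S0" "c*w*c = c" "w*c*w = w"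
  shows "plus S0 c = c*w"
proof -
  have cw: "c*w \<in> S0" using sub_mult ad c by blast
  have "(c*w)*(c*w) = (c*w*c)*w" by (simp add: mult.assoc)
  then have id: "idem (c*w)" using c by (simp add: idem_def)
  have R: "Rstar S0 c (c*w)" unfolding Rstar_def
  proof (intro ballI)
    fix u v :: "'a option"
    have 1: "lmul u (c*w) = lmul u c * w" "lmul v (c*w) = lmul v c * w" using lmul_assoc by auto
    have 2: "lmul u c = lmul u (c*w) * c" "lmul v c = lmul v (c*w) * c"
      using lmul_assoc[of u "c*w" c] lmul_assoc[of v "c*w" c] c(4) c(3) by auto
    show "(lmul u c = lmul v c) = (lmul u (c * w) = lmul v (c * w))"
      using 1 2 by metis
  qed
  have "plus S0 c = c * w"
    using plus_unique[OF ad _ _ _ cw id R] plus_prop[OF ad c(1)] by blast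
  then show ?thesis .
qed

lemma star_eq:
  assumes ad: "adequate S0" and c: "c \<in> S0" "w \<in> S0" "c*w*c = c" "w*c*w = w"
  shows "star S0 c = w*c"
proof -
  have cw: "w*c \<in> S0" using sub_mult ad c by blast
  have "(w*c)*(w*c) = (w*c*w)*c" by (simp add: mult.assoc)
  then have id: "idem (w*c)" using c by (simp add: idem_def)
  have R: "Lstar S0 c (w*c)" unfolding Lstar_def
  proof (intro ballI)
    fix u v :: "'a option"
    have 1: "rmul (w*c) u = w * rmul c u" "rmul (w*c) v = w * rmul c v" using rmul_assoc by auto
    have 2: "rmul c u = c * rmul (w*c) u" "rmul c v = c * rmul (w*c) v"
      using rmul_assoc[of c "w*c" u] rmul_assoc[of c "w*c" v] c(3)
      by (auto simp: mult.assoc)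
    show "(rmul c u = rmul c v) = (rmul (w*c) u = rmul (w*c) v)"
      using 1 2 by metis
  qed
  show ?thesis
    using star_unique[OF ad _ _ _ cw id R] star_prop[OF ad c(1)] by blast
qed

lemma orth_inv:
  fixes a :: "'a::semigroup_mult"
  assumes orth: "orthodox TYPE('a)"
    and a: "a*a'*a = a" "a'*a*a' = a'" and b: "b*b'*b = b" "b'*b*b' = b'"
  shows "a*b*(b'*a')*(a*b) = a*b" "b'*a'*(a*b)*(b'*a') = b'*a'"
proof -
  have ia: "idem (a'*a)" "idem (a*a')" using a by (simp_all add: idem_def mult.assoc[symmetric])
  have ib: "idem (b*b')" "idem (b'*b)" using b by (simp_all add: idem_def mult.assoc[symmetric])
  have i1: "idem (a'*a*(b*b'))" using orth ia ib unfolding orthodox_def by blast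
  have i2: "idem (b*b'*(a'*a))" using orth ia ib unfolding orthodox_def by blast
  have "a*b*(b'*a')*(a*b) = (a*a'*a)*b*(b'*a')*(a*(b*b'*b))" using a b by simp
  also have "\<dots> = a*((a'*a*(b*b'))*(a'*a*(b*b')))*b" by (simp add: mult.assoc)
  also have "\<dots> = a*(a'*a*(b*b'))*b" using i1 by (simp add: idem_def)
  also have "\<dots> = (a*a'*a)*(b*b'*b)" by (simp add: mult.assoc)
  also have "\<dots> = a*b" using a b by simp
  finally show "a*b*(b'*a')*(a*b) = a*b" .
  have "b'*a'*(a*b)*(b'*a') = (b'*b*b')*a'*(a*b)*(b'*(a'*a*a'))" using a b by simp
  also have "\<dots> = b'*((b*b'*(a'*a))*(b*b'*(a'*a)))*a'" by (simp add: mult.assoc)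
  also have "\<dots> = b'*(b*b'*(a'*a))*a'" using i2 by (simp add: idem_def)
  also have "\<dots> = (b'*b*b')*(a'*a*a')" by (simp add: mult.assoc)
  also have "\<dots> = b'*a'" using a b by simp
  finally show "b'*a'*(a*b)*(b'*a') = b'*a'" .
qed

lemma decomp_of_inv:
  assumes ad: "adequate S0" and c: "c \<in> S0" "w \<in> S0" "c*w*c = c" "w*c*w = w"
    and z: "z*w*z = z" "w*z*w = w"
  shows "decomp S0 z c"
proof -
  have p: "plus S0 c = c*w" using plus_eq[OF ad c] .
  have s: "star S0 c = w*c" using star_eq[OF ad c] .
  have ie: "idem (z*w)" using z by (simp add: idem_def mult.assoc[symmetric])
  have if': "idem (w*z)" using z by (simp add: idem_def mult.assoc[symmetric])
  have zz: "z = z*w*c*(w*z)"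
  proof -
    have "z*w*c*(w*z) = z*(w*c*w)*z" by (simp add: mult.assoc)
    also have "\<dots> = z" using c z by simp
    finally show ?thesis by simp
  qed
  have gL: "greenL (z*w) (c*w)" unfolding greenL_def
  proof
    have "z*w*(c*w) = z*(w*c*w)" by (simp add: mult.assoc)
    then have "z*w = lmul (Some (z*w)) (c*w)" using c by simp
    then show "\<exists>x\<in>one_ext UNIV. z * w = lmul x (c * w)" by (metis one_ext_Some UNIV_I)
    have "c*w*(z*w) = c*(w*z*w)" by (simp add: mult.assoc)
    then have "c*w = lmul (Some (c*w)) (z*w)" using z by simp
    then show "\<exists>x\<in>one_ext UNIV. c * w = lmul x (z * w)" by (metis one_ext_Some UNIV_I)
  qed
  have gR: "greenR (w*z) (w*c)" unfolding greenR_def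
  proof
    have "w*c*(w*z) = (w*c*w)*z" by (simp add: mult.assoc)
    then have "w*z = rmul (w*c) (Some (w*z))" using c by simp
    then show "\<exists>x\<in>one_ext UNIV. w * z = rmul (w * c) x" by (metis one_ext_Some UNIV_I)
    have "w*z*(w*c) = (w*z*w)*c" by (simp add: mult.assoc)
    then have "w*c = rmul (w*z) (Some (w*c))" using z by simp
    then show "\<exists>x\<in>one_ext UNIV. w * c = rmul (w * z) x" by (metis one_ext_Some UNIV_I)
  qed
  show ?thesis unfolding decomp_def using c(1) ie if' zz gL gR p s by metis
qed

lemma bar_inv:
  assumes ad: "adequate S0" and d: "decomp S0 z a"
    and a': "a' \<in> S0" "a*a'*a = a" "a'*a*a' = a'"
  shows "z*a'*z = z" "a'*z*a' = a'"
proof -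
  have a: "a \<in> S0" using d by (simp add: decomp_def)
  obtain e f where ef: "idem e" "idem f" "z = e*a*f" "greenL e (plus S0 a)" "greenR f (star S0 a)"
    using d unfolding decomp_def by blast
  have p: "plus S0 a = a*a'" using plus_eq[OF ad a a'(1) a'(2) a'(3)] .
  have s: "star S0 a = a'*a" using star_eq[OF ad a a'(1) a'(2) a'(3)] .
  have ip: "idem (a*a')" "idem (a'*a)" using a' by (simp_all add: idem_def mult.assoc[symmetric])
  have e1: "a*a'*e = a*a'" using greenL_idem(2)[OF ef(4)[unfolded p] ef(1) ip(1)] .
  have f1: "f*(a'*a) = a'*a" using greenR_idem(2)[OF ef(5)[unfolded s] ef(2) ip(2)] .
  have fa: "f*a' = a'"
  proof -
    have "f*a' = f*(a'*a)*a'" using a' by (simp add: mult.assoc)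
    also have "\<dots> = a'" using f1 a' by simp
    finally show ?thesis .
  qed
  have ae: "a'*e = a'"
  proof -
    have "a'*e = (a'*a*a')*e" using a' by simp
    also have "\<dots> = a'*(a*a'*e)" by (simp add: mult.assoc)
    also have "\<dots> = a'" using e1 a' by (simp add: mult.assoc)
    finally show ?thesis .
  qed
  have "z*a'*z = e*a*(f*a')*e*a*f" using ef by (simp add: mult.assoc)
  also have "\<dots> = e*(a*a'*a)*f" using fa ae by (simp add: mult.assoc)
  also have "\<dots> = z" using ef a' by simp
  finally show "z*a'*z = z" .
  have "a'*z*a' = (a'*e)*a*(f*a')" using ef by (simp add: mult.assoc)
  also have "\<dots> = a'" using fa ae a' by simp
  finally show "a'*z*a' = a'" .
qed

lemma inv_exists:
  fixes S0 :: "'a::semigroup_mult set"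
  assumes orth: "orthodox TYPE('a)" and at: "adequate_transversal S0" and a: "a \<in> S0"
  shows "\<exists>a'\<in>S0. a*a'*a = a \<and> a'*a*a' = a'"
proof -
  have ad: "adequate S0" and ss: "star_subsemigroup S0" and uq: "\<forall>z. \<exists>!c. decomp S0 z c"
    using at unfolding adequate_transversal_def by auto
  have reg: "\<forall>a::'a. \<exists>x. a*x*a = a" using orth unfolding orthodox_def regular_def by blast
  obtain x where x: "a*x*a = a" using reg by blast
  obtain e where e: "e \<in> S0" "idem e" "Rstar S0 a e"
    using ad a unfolding adequate_def abundant_def by blast
  obtain f where f: "f \<in> S0" "idem f" "Lstar S0 a f"
    using ad a unfolding adequate_def abundant_def by blast
  have RU: "Rstar UNIV a e" using ss a e unfolding star_subsemigroup_def by blast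
  have LU: "Lstar UNIV a f" using ss a f unfolding star_subsemigroup_def by blast
  have ea: "e*a = a" using Rstar_idem_left[OF e(3) e(2) e(1)] .
  have axe: "a*x*e = e" using Rstar_inv[OF RU x] .
  have af: "a*f = a" using Lstar_idem_right[OF f(3) f(2) f(1)] .
  have fxa: "f*x*a = f" using Lstar_inv[OF LU x] .
  define ai where "ai = f*x*e"
  have aai: "a*ai = e" unfolding ai_def using af axe by (metis mult.assoc)
  have aia: "ai*a = f" unfolding ai_def using ea fxa by (metis mult.assoc)
  have fai: "f*ai = ai" unfolding ai_def using f(2) by (simp add: idem_def mult.assoc[symmetric])
  have aie: "ai*e = ai" unfolding ai_def using e(2) by (simp add: idem_def mult.assoc)
  have r1: "a*ai*a = a" using aai ea by simp
  have r2: "ai*a*ai = ai" using aia fai by simp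
  obtain b where db: "decomp S0 ai b" using uq by blast
  obtain g h where gh: "b \<in> S0" "idem g" "idem h" "ai = g*b*h"
     "greenL g (plus S0 b)" "greenR h (star S0 b)"
    using db unfolding decomp_def by blast
  define p where "p = plus S0 b"
  define q where "q = star S0 b"
  have pp: "p \<in> S0" "idem p" "Rstar S0 b p" using plus_prop[OF ad gh(1)] p_def by auto
  have qq: "q \<in> S0" "idem q" "Lstar S0 b q" using star_prop[OF ad gh(1)] q_def by auto
  have RUb: "Rstar UNIV b p" using ss gh(1) pp unfolding star_subsemigroup_def by blast
  have LUb: "Lstar UNIV b q" using ss gh(1) qq unfolding star_subsemigroup_def by blast
  obtain y where y: "b*y*b = b" using reg by blast
  have pb: "p*b = b" using Rstar_idem_left[OF pp(3) pp(2) pp(1)] .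
  have bq: "b*q = b" using Lstar_idem_right[OF qq(3) qq(2) qq(1)] .
  have byp: "b*y*p = p" using Rstar_inv[OF RUb y] .
  have qyb: "q*y*b = q" using Lstar_inv[OF LUb y] .
  have gp: "g*p = g" and pg: "p*g = p" using greenL_idem[OF gh(5)[folded p_def] gh(2) pp(2)] by auto
  have qh: "q*h = h" and hq: "h*q = q" using greenR_idem[OF gh(6)[folded q_def] gh(3) qq(2)] by auto
  have gai: "g*ai = ai" using gh(2,4) by (simp add: idem_def mult.assoc[symmetric])
  have aih: "ai*h = ai" using gh(3,4) by (simp add: idem_def mult.assoc)
  have gf: "g*f = f" using gai aia by (metis mult.assoc)
  have g_eq: "g = ai*q*y*p"
  proof -
    have "ai*q*y*p = g*(b*(h*q))*y*p" using gh(4) by (simp add: mult.assoc)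
    also have "\<dots> = g*(b*y*p)" using hq bq by (simp add: mult.assoc)
    also have "\<dots> = g" using byp gp by simp
    finally show ?thesis by simp
  qed
  have fg: "f*g = g" using g_eq fai by (metis mult.assoc)
  have fp: "f*p = p*f" using ad f(1,2) pp(1,2) unfolding adequate_def by blast
  have f1: "f = g*p*f" using gp gf by simp
  have "f*p = g*p*f*p" using f1 by simp
  also have "\<dots> = g*p*(p*f)" using fp by (simp add: mult.assoc)
  also have "\<dots> = g*p*f" using gp by (simp add: mult.assoc[symmetric])
  finally have fpf: "f*p = f" using f1 by simp
  have "p = p*(f*g)" using pg fg by simp
  also have "\<dots> = f*p*g" using fp by (simp add: mult.assoc)
  finally have pgq: "p = g" using fpf fg by simp
  have h_eq: "h = q*y*p*ai"
  proof -
    have "q*y*p*ai = q*y*(p*g)*b*h" using gh(4) by (simp add: mult.assoc)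
    also have "\<dots> = q*y*(p*b)*h" using pg by (simp add: mult.assoc)
    also have "\<dots> = (q*y*b)*h" using pb by simp
    also have "\<dots> = h" using qyb qh by simp
    finally show ?thesis by simp
  qed
  have he: "h*e = h" using h_eq aie by (metis mult.assoc)
  have eh: "e*h = e" using aai aih by (metis mult.assoc)
  have eq: "e*q = q*e" using ad e(1,2) qq(1,2) unfolding adequate_def by blast
  have e1: "e = e*q*h" using qh eh by (simp add: mult.assoc)
  have "q*e = q*e*q*h" using e1 by (simp add: mult.assoc)
  also have "\<dots> = (e*q)*q*h" using eq by simp
  also have "\<dots> = e*q*h" using qq(2) by (simp add: idem_def mult.assoc)
  finally have qe: "q*e = e" using e1 by simp
  have "q = (h*e)*q" using hq he by simp
  also have "\<dots> = h*(q*e)" using eq by (simp add: mult.assoc)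
  finally have qh2: "q = h" using qe he by simp
  have "ai = b" using gh(4) pgq qh2 pb bq by simp
  then have "ai \<in> S0" using gh(1) by simp
  then show ?thesis using r1 r2 by blast
qed

theorem corollary2p6:
  fixes S0 :: "'a::semigroup_mult set"
  assumes "orthodox TYPE('a)"
    and "adequate_transversal S0"
  shows "\<forall>x y::'a. bar S0 (x * y) = bar S0 x * bar S0 y"
proof (intro allI)
  fix x y :: 'a
  have ad: "adequate S0" and uq: "\<forall>z. \<exists>!c. decomp S0 z c"
    using assms(2) unfolding adequate_transversal_def by auto
  have dx: "decomp S0 x (bar S0 x)" unfolding bar_def using uq by (blast intro: theI')
  have dy: "decomp S0 y (bar S0 y)" unfolding bar_def using uq by (blast intro: theI')
  define a where "a = bar S0 x"
  define b where "b = bar S0 y"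
  have aS: "a \<in> S0" using dx a_def by (simp add: decomp_def)
  have bS: "b \<in> S0" using dy b_def by (simp add: decomp_def)
  obtain a' where a': "a' \<in> S0" "a*a'*a = a" "a'*a*a' = a'" using inv_exists[OF assms aS] by blast
  obtain b' where b': "b' \<in> S0" "b*b'*b = b" "b'*b*b' = b'" using inv_exists[OF assms bS] by blast
  have xa: "x*a'*x = x" "a'*x*a' = a'" using bar_inv[OF ad dx[folded a_def] a'] by auto
  have yb: "y*b'*y = y" "b'*y*b' = b'" using bar_inv[OF ad dy[folded b_def] b'] by auto
  have w1: "x*y*(b'*a')*(x*y) = x*y" "b'*a'*(x*y)*(b'*a') = b'*a'"
    using orth_inv[OF assms(1) xa yb] by auto
  have c1: "a*b*(b'*a')*(a*b) = a*b" "b'*a'*(a*b)*(b'*a') = b'*a'"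
    using orth_inv[OF assms(1) a'(2,3) b'(2,3)] by auto
  have d: "decomp S0 (x*y) (a*b)"
    using decomp_of_inv[OF ad sub_mult[OF ad aS bS] sub_mult[OF ad b'(1) a'(1)] c1 w1] .
  have "bar S0 (x*y) = a*b" unfolding bar_def using uq d by (blast intro: the1_equality)
  then show "bar S0 (x * y) = bar S0 x * bar S0 y" using a_def b_def by simp
qed

end
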